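(* Let $0<t<1$ and $\alpha>0$. Define $H^{t}:\mathbb{R}\to\mathbb{R}$ by $H^{t}(p)=0$ if $p=0$, $H^{t}(p)=t$ if $0<|p|\le 1$, and $H^{t}(p)=1$ if $|p|>1$. Let $x\in\mathbb{R}$ with $|x|\ge 1$, and consider $E(p)=(x-p)^{2}+\alpha H^{t}(p)$ for $p\in\mathbb{R}$. Then a global minimizer of $E$ over $p\in\mathbb{R}$ is given as follows. (i) If $\alpha>\frac{2-t+2\sqrt{1-t}}{t^{2}}$: $p=0$ if $|x|\le\sqrt{\alpha}$, and $p=x$ if $|x|>\sqrt{\alpha}$. (ii) If $\frac{2-t+2\sqrt{1-t}}{t^{2}}\ge\alpha\ge\frac{2-t-2\sqrt{1-t}}{t^{2}}$: $p=0$ if $|x|\le\frac{1+\alpha t}{2}$; $p=\operatorname{sgn}(x)$ if $\frac{1+\alpha t}{2}<|x|\le 1+\sqrt{\alpha(1-t)}$; and $p=x$ if $|x|>1+\sqrt{\alpha(1-t)}$. (iii) If $\frac{2-t-2\sqrt{1-t}}{t^{2}}>\alpha>0$: $p=\operatorname{sgn}(x)$ if $1\le|x|\le 1+\sqrt{\alpha(1-t)}$, and $p=x$ if $|x|>1+\sqrt{\alpha(1-t)}$.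
   Context: $\operatorname{sgn}(x)$ denotes the sign of $x$ ($1$ if $x>0$, $-1$ if $x<0$). The function $H^{t}$ is the per-entry penalty of the "$l_0^t$ measure", which counts entries of absolute value greater than $1$ with weight $1$ and nonzero entries of absolute value at most $1$ with weight $t$. *)

theory Defs
  imports Complex_Main
begin

definition Ht :: "real \<Rightarrow> real \<Rightarrow> real" where
  "Ht t p = (if p = 0 then 0 else if \<bar>p\<bar> \<le> 1 then t else 1)"

definition Eng :: "real \<Rightarrow> real \<Rightarrow> real \<Rightarrow> real \<Rightarrow> real" where
  "Eng t \<alpha> x p = (x - p)^2 + \<alpha> * Ht t p"

definition is_global_min :: "(real \<Rightarrow> real) \<Rightarrow> real \<Rightarrow> bool" where
  "is_global_min f p \<longleftrightarrow> (\<forall>q. f p \<le> f q)"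

end

theory Submission
  imports Defs
begin

lemma Eq_small: "1 \<le> \<bar>x\<bar> \<Longrightarrow> \<bar>q\<bar> \<le> 1 \<Longrightarrow> (\<bar>x\<bar> - 1)^2 \<le> (x - q)^2"
  for x q :: real
proof -
  assume a: "1 \<le> \<bar>x\<bar>" "\<bar>q\<bar> \<le> 1"
  have "\<bar>x\<bar> - 1 \<le> \<bar>x - q\<bar>" using a by linarith
  hence "(\<bar>x\<bar> - 1)^2 \<le> \<bar>x - q\<bar>^2" using a by (intro power_mono) auto
  thus ?thesis by simp
qed

lemma gm0:
  fixes t \<alpha> x :: real
  assumes "0 < t" "t < 1" "\<alpha> > 0" "\<bar>x\<bar> \<ge> 1"
    "\<bar>x\<bar>^2 \<le> \<alpha>" "\<bar>x\<bar>^2 \<le> (\<bar>x\<bar> - 1)^2 + \<alpha> * t"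
  shows "is_global_min (Eng t \<alpha> x) 0"
  unfolding is_global_min_def Eng_def Ht_def
proof (intro allI)
  fix q :: real
  show "(x - 0)\<^sup>2 + \<alpha> * (if 0 = (0::real) then 0 else if \<bar>0::real\<bar> \<le> 1 then t else 1)
    \<le> (x - q)\<^sup>2 + \<alpha> * (if q = 0 then 0 else if \<bar>q\<bar> \<le> 1 then t else 1)"
  proof (cases "q = 0")
    case False
    show ?thesis
    proof (cases "\<bar>q\<bar> \<le> 1")
      case True
      then show ?thesis using Eq_small[OF assms(4) True] False assms by simp
    next
      case F: False
      then show ?thesis using False assms by (simp add: add_increasing)
    qed
  qed simp
qed

lemma gm1:
  fixes t \<alpha> x :: real
  assumes "0 < t" "t < 1" "\<alpha> > 0" "\<bar>x\<bar> \<ge> 1"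
    "(\<bar>x\<bar> - 1)^2 + \<alpha> * t \<le> \<bar>x\<bar>^2" "(\<bar>x\<bar> - 1)^2 + \<alpha> * t \<le> \<alpha>"
  shows "is_global_min (Eng t \<alpha> x) (sgn x)"
proof -
  have x0: "x \<noteq> 0" using assms by auto
  have e: "Eng t \<alpha> x (sgn x) = (\<bar>x\<bar> - 1)^2 + \<alpha> * t"
    unfolding Eng_def Ht_def using x0
    by (cases "x > 0") (auto simp: power2_eq_square algebra_simps)
  show ?thesis unfolding is_global_min_def e
  proof
    fix q
    show "(\<bar>x\<bar> - 1)\<^sup>2 + \<alpha> * t \<le> Eng t \<alpha> x q"
      unfolding Eng_def Ht_def
      using Eq_small[OF assms(4), of q] assms
      by (auto simp: add_increasing)
  qed
qed

lemma gmx: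
  fixes t \<alpha> x :: real
  assumes "0 < t" "t < 1" "\<alpha> > 0" "\<bar>x\<bar> > 1"
    "\<alpha> \<le> \<bar>x\<bar>^2" "\<alpha> \<le> (\<bar>x\<bar> - 1)^2 + \<alpha> * t"
  shows "is_global_min (Eng t \<alpha> x) x"
proof -
  have e: "Eng t \<alpha> x x = \<alpha>"
    unfolding Eng_def Ht_def using assms by auto
  show ?thesis unfolding is_global_min_def e
  proof
    fix q
    show "\<alpha> \<le> Eng t \<alpha> x q"
      unfolding Eng_def Ht_def
      using Eq_small[of x q] assms
      by (auto simp: add_increasing)
  qed
qed

theorem theorem3p2:
  fixes t \<alpha> x :: real
  assumes "0 < t" "t < 1" "\<alpha> > 0" "\<bar>x\<bar> \<ge> 1"
  shows
   "(\<alpha> > (2 - t + 2 * sqrt (1 - t)) / t^2 \<longrightarrow>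
       (\<bar>x\<bar> \<le> sqrt \<alpha> \<longrightarrow> is_global_min (Eng t \<alpha> x) 0) \<and>
       (\<bar>x\<bar> > sqrt \<alpha> \<longrightarrow> is_global_min (Eng t \<alpha> x) x))
    \<and>
    ((2 - t + 2 * sqrt (1 - t)) / t^2 \<ge> \<alpha> \<and> \<alpha> \<ge> (2 - t - 2 * sqrt (1 - t)) / t^2 \<longrightarrow>
       (\<bar>x\<bar> \<le> (1 + \<alpha> * t) / 2 \<longrightarrow> is_global_min (Eng t \<alpha> x) 0) \<and>
       ((1 + \<alpha> * t) / 2 < \<bar>x\<bar> \<and> \<bar>x\<bar> \<le> 1 + sqrt (\<alpha> * (1 - t))
          \<longrightarrow> is_global_min (Eng t \<alpha> x) (sgn x)) \<and>
       (\<bar>x\<bar> > 1 + sqrt (\<alpha> * (1 - t)) \<longrightarrow> is_global_min (Eng t \<alpha> x) x))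
    \<and>
    ((2 - t - 2 * sqrt (1 - t)) / t^2 > \<alpha> \<longrightarrow>
       (1 \<le> \<bar>x\<bar> \<and> \<bar>x\<bar> \<le> 1 + sqrt (\<alpha> * (1 - t)) \<longrightarrow> is_global_min (Eng t \<alpha> x) (sgn x)) \<and>
       (\<bar>x\<bar> > 1 + sqrt (\<alpha> * (1 - t)) \<longrightarrow> is_global_min (Eng t \<alpha> x) x))"
proof -
  define r where "r = sqrt (1 - t)"
  define s where "s = sqrt \<alpha>"
  define a where "a = \<bar>x\<bar>"
  have r0: "0 < r" "r < 1" using assms by (auto simp: r_def)
  have rr: "r^2 = 1 - t" using assms by (simp add: r_def)
  have tt: "t = (1 - r) * (1 + r)" using rr by (simp add: power2_eq_square algebra_simps)
  have s0: "0 < s" using assms by (simp add: s_def)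
  have ss: "s^2 = \<alpha>" using assms by (simp add: s_def)
  have sr: "sqrt (\<alpha> * (1 - t)) = s * r" by (simp add: s_def r_def real_sqrt_mult)
  have a1: "a \<ge> 1" using assms by (simp add: a_def)
  have xa: "x^2 = a^2" by (simp add: a_def)
  have Ap: "(2 - t + 2 * sqrt (1 - t)) / t^2 = (1 / (1 - r))^2"
  proof -
    have "2 - t + 2 * sqrt (1 - t) = (1 + r)^2" unfolding r_def[symmetric] tt using r0 by (simp add: power2_eq_square algebra_simps)
    moreover have "t^2 = (1 - r)^2 * (1 + r)^2" unfolding tt by (simp add: power_mult_distrib)
    ultimately show ?thesis using r0 by (simp add: power_divide)
  qed
  have Am: "(2 - t - 2 * sqrt (1 - t)) / t^2 = (1 / (1 + r))^2"
  proof -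
    have "2 - t - 2 * sqrt (1 - t) = (1 - r)^2" unfolding r_def[symmetric] tt using r0 by (simp add: power2_eq_square algebra_simps)
    moreover have "t^2 = (1 - r)^2 * (1 + r)^2" unfolding tt by (simp add: power_mult_distrib)
    ultimately show ?thesis using r0 by (simp add: power_divide)
  qed
  have key: "t * s^2 - 2 * s + 1 = (s * (1 - r) - 1) * (s * (1 + r) - 1)"
    unfolding tt by (simp add: power2_eq_square algebra_simps)
  have cmp: "\<And>c. 0 < c \<Longrightarrow> (\<alpha> > c^2 \<longleftrightarrow> s > c) \<and> (\<alpha> \<ge> c^2 \<longleftrightarrow> s \<ge> c)"
    unfolding s_def by (metis abs_of_pos less_eq_real_def real_sqrt_abs real_sqrt_le_iff real_sqrt_less_iff not_le)
  have sq_le: "\<And>u v::real. 0 \<le> u \<Longrightarrow> u \<le> v \<Longrightarrow> u^2 \<le> v^2" by (simp add: power_mono)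
  have E1: "(a - 1)^2 + \<alpha> * t \<le> a^2 \<longleftrightarrow> \<alpha> * t \<le> 2 * a - 1" by (simp add: power2_eq_square algebra_simps)
  have ar: "\<alpha> - \<alpha> * t = (s * r)^2" using ss rr by (simp add: power_mult_distrib right_diff_distrib)
  have E0: "a^2 \<le> (a - 1)^2 + \<alpha> * t \<longleftrightarrow> 2 * a - 1 \<le> \<alpha> * t" by (simp add: power2_eq_square algebra_simps)
  have E2: "\<alpha> \<le> (a - 1)^2 + \<alpha> * t \<longleftrightarrow> (s * r)^2 \<le> (a - 1)^2"
    using ar by linarith
  have E3: "(a - 1)^2 + \<alpha> * t \<le> \<alpha> \<longleftrightarrow> (a - 1)^2 \<le> (s * r)^2"
    using ar by linarith
  have srp: "0 \<le> s * r" using s0 r0 by simp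
  have CI: "\<alpha> > (1 / (1 - r))^2 \<Longrightarrow>
       (a \<le> s \<longrightarrow> is_global_min (Eng t \<alpha> x) 0) \<and> (a > s \<longrightarrow> is_global_min (Eng t \<alpha> x) x)"
  proof -
    assume h: "\<alpha> > (1 / (1 - r))^2"
    hence "s > 1 / (1 - r)" using cmp[of "1/(1-r)"] r0 by simp
    hence U: "s * (1 - r) > 1" using r0 by (simp add: field_simps)
    have V: "s * (1 + r) > 1" using U srp by (simp add: algebra_simps)
    have K: "2 * s - 1 \<le> \<alpha> * t"
    proof -
      have "(s * (1 - r) - 1) * (s * (1 + r) - 1) > 0" using U V by simp
      thus ?thesis using key ss by (simp add: algebra_simps)
    qed
    show ?thesis
    proof (intro conjI impI)
      assume "a \<le> s"
      show "is_global_min (Eng t \<alpha> x) 0"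
        apply (rule gm0) using assms apply simp_all
        using sq_le[of a s] \<open>a \<le> s\<close> a1 ss a_def apply simp
        using E0 K \<open>a \<le> s\<close> a_def a_def by simp
    next
      assume as: "a > s"
      have "s > 1" using U srp by (simp add: algebra_simps)
      show "is_global_min (Eng t \<alpha> x) x"
        apply (rule gmx) using assms apply simp_all
        using \<open>s > 1\<close> as a_def apply simp
        using sq_le[of s a] as s0 ss a_def apply simp
        using E2 sq_le[of "s*r" "a-1"] U as srp a_def by (simp add: algebra_simps)
    qed
  qed
  have CII: "\<alpha> \<le> (1 / (1 - r))^2 \<Longrightarrow> \<alpha> \<ge> (1 / (1 + r))^2 \<Longrightarrow>
       (a \<le> (1 + \<alpha> * t) / 2 \<longrightarrow> is_global_min (Eng t \<alpha> x) 0) \<and>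
       ((1 + \<alpha> * t) / 2 < a \<and> a \<le> 1 + s * r \<longrightarrow> is_global_min (Eng t \<alpha> x) (sgn x)) \<and>
       (a > 1 + s * r \<longrightarrow> is_global_min (Eng t \<alpha> x) x)"
  proof -
    assume h1: "\<alpha> \<le> (1 / (1 - r))^2" and h2: "\<alpha> \<ge> (1 / (1 + r))^2"
    have "s \<le> 1 / (1 - r)" using cmp[of "1/(1-r)"] r0 h1 by (simp add: not_less[symmetric])
    hence U: "s * (1 - r) \<le> 1" using r0 by (simp add: field_simps)
    have "s \<ge> 1 / (1 + r)" using cmp[of "1/(1+r)"] r0 h2 by simp
    hence V: "s * (1 + r) \<ge> 1" using r0 by (simp add: field_simps)
    have K: "\<alpha> * t + 1 \<le> 2 * s"
    proof -
      have "(s * (1 - r) - 1) * (s * (1 + r) - 1) \<le> 0" using U V by (simp add: mult_nonpos_nonneg)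
      thus ?thesis using key ss by (simp add: algebra_simps)
    qed
    show ?thesis
    proof (intro conjI impI)
      assume h: "a \<le> (1 + \<alpha> * t) / 2"
      show "is_global_min (Eng t \<alpha> x) 0"
        apply (rule gm0) using assms apply simp_all
        using sq_le[of a s] h K a1 ss a_def apply simp
        using E0 h a_def by simp
    next
      assume h: "(1 + \<alpha> * t) / 2 < a \<and> a \<le> 1 + s * r"
      show "is_global_min (Eng t \<alpha> x) (sgn x)"
        apply (rule gm1) using assms apply simp_all
        using E1 h a_def a_def apply simp
        using E3 sq_le[of "a-1" "s*r"] h a1 a_def by simp
    next
      assume as: "a > 1 + s * r"
      have "s < a" using U as by (simp add: algebra_simps)
      show "is_global_min (Eng t \<alpha> x) x"
        apply (rule gmx) using assms apply simp_all
        using srp as a_def apply simp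
        using sq_le[of s a] \<open>s < a\<close> s0 ss a_def apply simp
        using E2 sq_le[of "s*r" "a-1"] as srp a_def by (simp add: algebra_simps)
    qed
  qed
  have CIII: "\<alpha> < (1 / (1 + r))^2 \<Longrightarrow>
       (1 \<le> a \<and> a \<le> 1 + s * r \<longrightarrow> is_global_min (Eng t \<alpha> x) (sgn x)) \<and>
       (a > 1 + s * r \<longrightarrow> is_global_min (Eng t \<alpha> x) x)"
  proof -
    assume h: "\<alpha> < (1 / (1 + r))^2"
    have "s < 1 / (1 + r)" using cmp[of "1/(1+r)"] r0 h by (simp add: not_le[symmetric])
    hence V: "s * (1 + r) < 1" using r0 by (simp add: field_simps)
    have s1: "s < 1" using V srp by (simp add: algebra_simps)
    have al: "\<alpha> < 1" using s1 s0 ss power_strict_mono[of s 1 2] by simp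
    have at: "\<alpha> * t < 1" proof - have "\<alpha> * t < \<alpha> * 1" using assms by (intro mult_strict_left_mono) auto thus ?thesis using al by simp qed
    show ?thesis
    proof (intro conjI impI)
      assume h: "1 \<le> a \<and> a \<le> 1 + s * r"
      show "is_global_min (Eng t \<alpha> x) (sgn x)"
        apply (rule gm1) using assms apply simp_all
        using E1 at a1 a_def a_def apply simp
        using E3 sq_le[of "a-1" "s*r"] h a1 a_def by simp
    next
      assume as: "a > 1 + s * r"
      show "is_global_min (Eng t \<alpha> x) x"
        apply (rule gmx) using assms apply simp_all
        using srp as a_def apply simp
        using sq_le[of 1 a] al as srp a_def apply simp
        using E2 sq_le[of "s*r" "a-1"] as srp a_def by (simp add: algebra_simps)
    qed
  qed
  show ?thesis unfolding Ap Am sr s_def[symmetric] a_def[symmetric]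
    using CI CII CIII by blast
qed

end
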